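(* Let $\mathcal{X} \in \{- \lambda \mathcal{E}_k, - \lambda \mathcal{F}_k\}$ where $1 \leq k \leq n$ and $\lambda \in R$. Suppose $v \cdot w^\intercal = 1$ for two vectors $v ,w \in R^{n+1}$ with $n \geq 2$. Then \[\begin{pmatrix} 1 & \mathcal{X}\\ 0 & 1 \end{pmatrix} \mathcal{S}(v,w) \begin{pmatrix} 1 & 0\\ -\overline{\mathcal{X}} & 1 \end{pmatrix} = \mathcal{S}(v\varepsilon,\, w (\varepsilon^{\intercal})^{-1}), \qquad \begin{pmatrix} 1 & 0\\ -\overline{\mathcal{X}} & 1 \end{pmatrix} \mathcal{S}(v,w) \begin{pmatrix} 1 & \mathcal{X} \\ 0 & 1 \end{pmatrix} = \mathcal{S}( v \sigma,\, w (\sigma^{\intercal})^{-1})\] for some $\varepsilon, \sigma \in E_{n+1}(R)$.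
   Context: $R$ is a commutative ring and $E_{m}(R)$ is the subgroup of $GL_m(R)$ generated by elementary matrices $1+\lambda e_{ij}$, $i\ne j$. For $v=(a_1,\dots,a_m), w=(b_1,\dots,b_m)\in R^m$, Suslin matrices are defined recursively: $\mathcal{S}_1(v,w)=\begin{pmatrix} a_1 & a_2\\ -b_2 & b_1\end{pmatrix}$, $\overline{\mathcal{S}_1(v,w)}=\begin{pmatrix} b_1 & -a_2\\ b_2 & a_1\end{pmatrix}$, and with $v=(a_1,v')$, $w=(b_1,w')$, $\mathcal{S}_{m-1}(v,w)=\begin{pmatrix} a_1 & \mathcal{S}_{m-2}(v',w')\\ -\overline{\mathcal{S}_{m-2}(v',w')} & b_1\end{pmatrix}$, $\overline{\mathcal{S}_{m-1}(v,w)}=\begin{pmatrix} b_1 & -\mathcal{S}_{m-2}(v',w')\\ \overline{\mathcal{S}_{m-2}(v',w')} & a_1\end{pmatrix}$. Here $\mathcal{S}(v,w)=\mathcal{S}_n(v,w)$ for $v,w\in R^{n+1}$, and $\mathcal{E}_k = \mathcal{S}_{n-1}(e_k,0)$, $\mathcal{F}_k=\mathcal{S}_{n-1}(0,f_k)$ with $e_k,f_k$ the standard basis vectors of $R^n$, $(R^n)^*$ (so $\mathcal{X}$ has the size of the off-diagonal block of $\mathcal{S}(v,w)$). *)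

theory Defs
  imports "Jordan_Normal_Form.Gauss_Jordan_Elimination"
begin

definition row_mult :: "'a :: comm_ring_1 vec \<Rightarrow> 'a mat \<Rightarrow> 'a vec" (infixl \<open>\<^sub>r*\<close> 70) where
  "v \<^sub>r* A = vec (dim_col A) (\<lambda>j. v \<bullet> col A j)"

(* Elementary matrix 1 + a e_{ij} of size m: addrow_mat m a i j.
   E_m(R): subgroup of GL_m(R) generated by elementary matrices with i \<noteq> j.
   (Closed under inverses automatically since (1+a e_ij)^{-1} = 1 - a e_ij.) *)
inductive_set elem_group :: "nat \<Rightarrow> 'a :: comm_ring_1 mat set" for m :: nat where
  one: "1\<^sub>m m \<in> elem_group m"
| step: "A \<in> elem_group m \<Longrightarrow> i < m \<Longrightarrow> j < m \<Longrightarrow> i \<noteq> j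
          \<Longrightarrow> A * addrow_mat m a i j \<in> elem_group m"

definition vtl :: "'a vec \<Rightarrow> 'a vec" where
  "vtl v = vec (dim_vec v - 1) (\<lambda>i. v $ (i + 1))"

(* Suslin matrices S_r(v,w) and their bars, for v, w of length r+1
   (coordinates v$0 = a_1, ..., v$r = a_{r+1}); S_r is 2^r x 2^r.
   The case r = 0 is not used in the paper (it gives the 1x1 matrix [a_1] / [b_1]). *)
fun suslin :: "nat \<Rightarrow> 'a :: comm_ring_1 vec \<Rightarrow> 'a vec \<Rightarrow> 'a mat"
and suslin_bar :: "nat \<Rightarrow> 'a :: comm_ring_1 vec \<Rightarrow> 'a vec \<Rightarrow> 'a mat" where
  "suslin 0 v w = mat 1 1 (\<lambda>_. v $ 0)"
| "suslin (Suc 0) v w = mat_of_rows_list 2 [[v $ 0, v $ 1], [- (w $ 1), w $ 0]]"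
| "suslin (Suc (Suc r)) v w =
     four_block_mat (v $ 0 \<cdot>\<^sub>m 1\<^sub>m (2 ^ Suc r)) (suslin (Suc r) (vtl v) (vtl w))
                    (- suslin_bar (Suc r) (vtl v) (vtl w)) (w $ 0 \<cdot>\<^sub>m 1\<^sub>m (2 ^ Suc r))"
| "suslin_bar 0 v w = mat 1 1 (\<lambda>_. w $ 0)"
| "suslin_bar (Suc 0) v w = mat_of_rows_list 2 [[w $ 0, - (v $ 1)], [w $ 1, v $ 0]]"
| "suslin_bar (Suc (Suc r)) v w =
     four_block_mat (w $ 0 \<cdot>\<^sub>m 1\<^sub>m (2 ^ Suc r)) (- suslin (Suc r) (vtl v) (vtl w))
                    (suslin_bar (Suc r) (vtl v) (vtl w)) (v $ 0 \<cdot>\<^sub>m 1\<^sub>m (2 ^ Suc r))"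

end

theory Submission
  imports Defs
begin


definition idp :: "nat \<Rightarrow> (nat \<Rightarrow> nat \<Rightarrow> 'a::comm_ring_1) \<Rightarrow> 'a mat" where
  "idp m M = mat m m (\<lambda>(i,j). (if i = j then 1 else 0) + M i j)"

lemma idp_carrier[simp]: "idp m M \<in> carrier_mat m m"
  by (simp add: idp_def)

lemma idp_dims[simp]: "dim_row (idp m M) = m" "dim_col (idp m M) = m"
  by (simp_all add: idp_def)

lemma idp_index[simp]: "i < m \<Longrightarrow> j < m \<Longrightarrow> idp m M $$ (i,j) = (if i = j then 1 else 0) + M i j"
  by (simp add: idp_def)

lemma idp_mult: "idp m M * idp m N = idp m (\<lambda>i j. M i j + N i j + (\<Sum>l<m. M i l * N l j))"
proof (rule eq_matI)
  fix i j assume ij: "i < dim_row (idp m (\<lambda>i j. M i j + N i j + (\<Sum>l<m. M i l * N l j)))"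
    "j < dim_col (idp m (\<lambda>i j. M i j + N i j + (\<Sum>l<m. M i l * N l j)))"
  hence i: "i < m" and j: "j < m" by auto
  have "(idp m M * idp m N) $$ (i,j) = (\<Sum>l<m. ((if i = l then 1 else 0) + M i l) * ((if l = j then 1 else 0) + N l j))"
    using i j by (simp add: scalar_prod_def atLeast0LessThan)
  also have "\<dots> = (\<Sum>l<m. (if i = l then (if l = j then 1 else 0) else 0) + (if i = l then N l j else 0)
     + (if l = j then M i l else 0) + M i l * N l j)"
    by (intro sum.cong refl) (simp add: algebra_simps)
  also have "\<dots> = (\<Sum>l<m. (if i = l then (if l = j then 1 else 0) else 0)) + (\<Sum>l<m. (if i = l then N l j else 0))
     + (\<Sum>l<m. (if l = j then M i l else 0)) + (\<Sum>l<m. M i l * N l j)"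
    by (simp add: sum.distrib)
  also have "\<dots> = (if i = j then 1 else 0) + N i j + M i j + (\<Sum>l<m. M i l * N l j)"
    using i j by simp
  finally show "(idp m M * idp m N) $$ (i,j) = idp m (\<lambda>i j. M i j + N i j + (\<Sum>l<m. M i l * N l j)) $$ (i,j)"
    using i j by (simp add: algebra_simps)
qed auto

lemma idp_cong: "(\<And>i j. i < m \<Longrightarrow> j < m \<Longrightarrow> M i j = N i j) \<Longrightarrow> idp m M = idp m N"
  by (rule eq_matI) auto

lemma addrow_idp: "addrow_mat m a k l = idp m (\<lambda>i j. if i = k \<and> j = l then a else 0)"
  by (rule eq_matI) (auto simp: addrow_mat_def)

lemma idp_zero: "idp m (\<lambda>_ _. 0) = 1\<^sub>m m"
  by (rule eq_matI) auto

lemma transpose_idp: "transpose_mat (idp m M) = idp m (\<lambda>i j. M j i)"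
  by (rule eq_matI) auto

lemma elem_carrier: "A \<in> elem_group m \<Longrightarrow> A \<in> carrier_mat m m"
  by (induction rule: elem_group.induct) (auto simp: addrow_mat_def)

lemma elem_mult: assumes "B \<in> elem_group m" "A \<in> elem_group m" shows "A * B \<in> elem_group m"
  using assms(1)
proof (induction rule: elem_group.induct)
  case one
  then show ?case using assms(2) elem_carrier[OF assms(2)] by simp
next
  case (step B i j a)
  have "A * (B * addrow_mat m a i j) = (A * B) * addrow_mat m a i j"
    using elem_carrier[OF assms(2)] elem_carrier[OF step(1)]
    by (simp add: assoc_mult_mat[symmetric, of _ m m _ m _ m] addrow_mat_def)
  then show ?case using step elem_group.step by metis
qed

lemma elem_addrow: "i < m \<Longrightarrow> j < m \<Longrightarrow> i \<noteq> j \<Longrightarrow> addrow_mat m a i j \<in> elem_group m"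
  using elem_group.step[OF elem_group.one, of i m j a] by (simp add: addrow_mat_def)

lemma elem_transpose: "A \<in> elem_group m \<Longrightarrow> transpose_mat A \<in> elem_group m"
proof (induction rule: elem_group.induct)
  case one
  then show ?case by (simp add: elem_group.one)
next
  case (step A i j a)
  have "transpose_mat (A * addrow_mat m a i j) = transpose_mat (addrow_mat m a i j) * transpose_mat A"
    using elem_carrier[OF step(1)] by (simp add: transpose_mult[of _ m m _ m])
  also have "transpose_mat (addrow_mat m a i j) = addrow_mat m a j i"
    by (simp add: addrow_idp transpose_idp) (rule idp_cong, auto)
  finally show ?case using step elem_mult elem_addrow by metis
qed


lemma elem_col_aux: assumes j: "j < m"
  shows "idp m (\<lambda>a b. if b = j \<and> a < N \<and> a \<noteq> j then z a else 0) \<in> elem_group m"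
proof (induction N)
  case 0
  then show ?case by (simp add: idp_zero elem_group.one)
next
  case (Suc N)
  show ?case
  proof (cases "N = j \<or> N \<ge> m")
    case True
    have "idp m (\<lambda>a b. if b = j \<and> a < Suc N \<and> a \<noteq> j then z a else 0)
       = idp m (\<lambda>a b. if b = j \<and> a < N \<and> a \<noteq> j then z a else 0)"
      using True by (intro idp_cong) auto
    then show ?thesis using Suc by simp
  next
    case False
    have eq: "idp m (\<lambda>a b. if b = j \<and> a < N \<and> a \<noteq> j then z a else 0) * addrow_mat m (z N) N j
       = idp m (\<lambda>a b. if b = j \<and> a < Suc N \<and> a \<noteq> j then z a else 0)"
      unfolding addrow_idp idp_mult
    proof (intro idp_cong)
      fix a b
      have "(\<Sum>l<m. (if l = j \<and> a < N \<and> a \<noteq> j then z a else 0) * (if l = N \<and> b = j then z N else 0)) = 0"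
        by (rule sum.neutral) (use False in auto)
      then show "(if b = j \<and> a < N \<and> a \<noteq> j then z a else 0) +
        (if a = N \<and> b = j then z N else 0) + (\<Sum>l<m. (if l = j \<and> a < N \<and> a \<noteq> j then z a else 0) * (if l = N \<and> b = j then z N else 0))
        = (if b = j \<and> a < Suc N \<and> a \<noteq> j then z a else 0)"
        using False by auto
    qed
    have ar: "addrow_mat m (z N) N j \<in> elem_group m" using False j by (intro elem_addrow) auto
    show ?thesis using elem_mult[OF ar Suc.IH] by (simp only: eq)
  qed
qed

lemma elem_col: assumes j: "j < m" and z: "z j = 0"
  shows "idp m (\<lambda>a b. if b = j then z a else 0) \<in> elem_group m"
proof -
  have "idp m (\<lambda>a b. if b = j then z a else 0) = idp m (\<lambda>a b. if b = j \<and> a < m \<and> a \<noteq> j then z a else 0)"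
    using z by (intro idp_cong) auto
  then show ?thesis using elem_col_aux[OF j] by simp
qed

lemma elem_core:
  fixes z :: "nat \<Rightarrow> 'a::comm_ring_1"
  assumes pq: "p < m" "q < m" "p \<noteq> q" and l: "l < m" "l \<noteq> p" "l \<noteq> q"
  shows "idp m (\<lambda>i j. z i * (c * (if j = p then z q else if j = q then - z p else 0))) \<in> elem_group m"
proof -
  define y where "y j = c * (if j = p then z q else if j = q then - z p else 0)" for j
  define z1 where "z1 a = (if a = p \<or> a = q then z a else 0)" for a
  define z2 where "z2 a = (if a = p \<or> a = q then 0 else z a)" for a
  define el where "el a = (if a = l then 1 else (0::'a))" for a
  have s1: "idp m (\<lambda>i j. z i * y j) = idp m (\<lambda>i j. z1 i * y j) * idp m (\<lambda>i j. z2 i * y j)"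
    unfolding idp_mult
  proof (intro idp_cong)
    fix i j
    have "(\<Sum>l<m. z1 i * y l * (z2 l * y j)) = 0"
      by (rule sum.neutral) (simp add: y_def z2_def)
    then show "z i * y j = z1 i * y j + z2 i * y j + (\<Sum>l<m. z1 i * y l * (z2 l * y j))"
      by (simp add: z1_def z2_def algebra_simps)
  qed
  have s2: "idp m (\<lambda>i j. z2 i * y j) = idp m (\<lambda>a b. if b = p then y p * z2 a else 0) * idp m (\<lambda>a b. if b = q then y q * z2 a else 0)"
    unfolding idp_mult
  proof (intro idp_cong)
    fix i j
    have "(\<Sum>l<m. (if l = p then y p * z2 i else 0) * (if j = q then y q * z2 l else 0)) = 0"
      by (rule sum.neutral) (simp add: z2_def)
    then show "z2 i * y j = (if j = p then y p * z2 i else 0) + (if j = q then y q * z2 i else 0) + (\<Sum>l<m. (if l = p then y p * z2 i else 0) * (if j = q then y q * z2 l else 0))"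
      using pq by (simp add: y_def)
  qed
  have m2: "idp m (\<lambda>i j. z2 i * y j) \<in> elem_group m"
    unfolding s2 using pq by (intro elem_mult elem_col) (auto simp: z2_def)
  have A1: "idp m (\<lambda>i j. d * z1 i * el j) = addrow_mat m (d * z p) p l * addrow_mat m (d * z q) q l" for d
    unfolding addrow_idp idp_mult
  proof (intro idp_cong)
    fix i j assume "i < m" "j < m"
    have "(\<Sum>la<m. (if i = p \<and> la = l then d * z p else 0) * (if la = q \<and> j = l then d * z q else 0)) = 0"
      by (rule sum.neutral) (use l in simp)
    then show "d * z1 i * el j = (if i = p \<and> j = l then d * z p else 0) + (if i = q \<and> j = l then d * z q else 0) +
      (\<Sum>la<m. (if i = p \<and> la = l then d * z p else 0) * (if la = q \<and> j = l then d * z q else 0))"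
      using pq by (simp add: z1_def el_def)
  qed
  have A2: "idp m (\<lambda>i j. d * el i * y j) = addrow_mat m (d * y p) l p * addrow_mat m (d * y q) l q" for d
    unfolding addrow_idp idp_mult
  proof (intro idp_cong)
    fix i j assume "i < m" "j < m"
    have "(\<Sum>la<m. (if i = l \<and> la = p then d * y p else 0) * (if la = l \<and> j = q then d * y q else 0)) = 0"
      by (rule sum.neutral) (use l in simp)
    then show "d * el i * y j = (if i = l \<and> j = p then d * y p else 0) + (if i = l \<and> j = q then d * y q else 0) +
      (\<Sum>la<m. (if i = l \<and> la = p then d * y p else 0) * (if la = l \<and> j = q then d * y q else 0))"
      using pq by (simp add: y_def el_def)
  qed
  have e1: "idp m (\<lambda>i j. d * z1 i * el j) \<in> elem_group m" for d
    unfolding A1 using pq l by (intro elem_mult elem_addrow) auto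
  have e2: "idp m (\<lambda>i j. d * el i * y j) \<in> elem_group m" for d
    unfolding A2 using pq l by (intro elem_mult elem_addrow) auto
  have c1: "idp m (\<lambda>i j. 1 * z1 i * el j) * idp m (\<lambda>i j. 1 * el i * y j)
     = idp m (\<lambda>i j. z1 i * el j + el i * y j + z1 i * y j)"
    unfolding idp_mult
  proof (intro idp_cong)
    fix i j assume "i < m" "j < m"
    have "(\<Sum>la<m. 1 * z1 i * el la * (1 * el la * y j)) = (\<Sum>la<m. if la = l then z1 i * y j else 0)"
      by (rule sum.cong) (auto simp: el_def)
    also have "\<dots> = z1 i * y j" using l by simp
    finally have "(\<Sum>la<m. 1 * z1 i * el la * (1 * el la * y j)) = z1 i * y j" .
    then show "1 * z1 i * el j + 1 * el i * y j + (\<Sum>la<m. 1 * z1 i * el la * (1 * el la * y j)) = z1 i * el j + el i * y j + z1 i * y j"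
      by simp
  qed
  have c2: "idp m (\<lambda>i j. z1 i * el j + el i * y j + z1 i * y j) * idp m (\<lambda>i j. (-1) * z1 i * el j)
     = idp m (\<lambda>i j. el i * y j + z1 i * y j)"
    unfolding idp_mult
  proof (intro idp_cong)
    fix i j assume "i < m" "j < m"
    have yz: "y la * z1 la = (if la = p then c*z q*z p else 0) + (if la = q then -(c*z p*z q) else 0)" for la
      using pq by (simp add: y_def z1_def)
    have S: "(\<Sum>la<m. y la * z1 la) = 0"
      unfolding yz sum.distrib using pq by simp
    have "(\<Sum>la<m. (z1 i * el la + el i * y la + z1 i * y la) * (-1 * z1 la * el j))
       = (\<Sum>la<m. (-(el i + z1 i) * el j) * (y la * z1 la))"
      by (rule sum.cong) (auto simp: el_def z1_def l algebra_simps)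
    also have "\<dots> = 0" unfolding sum_distrib_left[symmetric] S by simp
    finally have "(\<Sum>la<m. (z1 i * el la + el i * y la + z1 i * y la) * (-1 * z1 la * el j)) = 0" .
    then show "z1 i * el j + el i * y j + z1 i * y j + -1 * z1 i * el j + (\<Sum>la<m. (z1 i * el la + el i * y la + z1 i * y la) * (-1 * z1 la * el j)) = el i * y j + z1 i * y j"
      by simp
  qed
  have c3: "idp m (\<lambda>i j. el i * y j + z1 i * y j) * idp m (\<lambda>i j. (-1) * el i * y j)
     = idp m (\<lambda>i j. z1 i * y j)"
    unfolding idp_mult
  proof (intro idp_cong)
    fix i j assume "i < m" "j < m"
    have "(\<Sum>la<m. (el i * y la + z1 i * y la) * (-1 * el la * y j)) = 0"
      by (rule sum.neutral) (auto simp: el_def y_def l)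
    then show "el i * y j + z1 i * y j + -1 * el i * y j + (\<Sum>la<m. (el i * y la + z1 i * y la) * (-1 * el la * y j)) = z1 i * y j"
      by simp
  qed
  have m1eq: "idp m (\<lambda>i j. z1 i * y j) = idp m (\<lambda>i j. 1 * z1 i * el j) * idp m (\<lambda>i j. 1 * el i * y j) * idp m (\<lambda>i j. (-1) * z1 i * el j) * idp m (\<lambda>i j. (-1) * el i * y j)"
    by (simp only: c1 c2 c3)
  have m1: "idp m (\<lambda>i j. z1 i * y j) \<in> elem_group m"
    unfolding m1eq by (intro elem_mult e1 e2)
  have "idp m (\<lambda>i j. z i * y j) \<in> elem_group m"
    unfolding s1 by (rule elem_mult[OF m2 m1])
  then show ?thesis by (simp add: y_def)
qed


lemma vtl_dim[simp]: "dim_vec (vtl v) = dim_vec v - 1"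
  by (simp add: vtl_def)

lemma vtl_index[simp]: "i < dim_vec v - 1 \<Longrightarrow> vtl v $ i = v $ (Suc i)"
  by (simp add: vtl_def)

lemma suslin_carrier:
  "suslin r v w \<in> carrier_mat (2^r) (2^r) \<and> suslin_bar r v w \<in> carrier_mat (2^r) (2^r)"
proof (induction r arbitrary: v w rule: less_induct)
  case (less r)
  consider "r = 0" | "r = Suc 0" | r' where "r = Suc (Suc r')"
    by (metis not0_implies_Suc)
  then show ?case
  proof cases
    case 1 then show ?thesis by simp
  next
    case 2 then show ?thesis by (simp add: mat_of_rows_list_def numeral_2_eq_2)
  next
    case 3
    have IH: "suslin (Suc r') (vtl v) (vtl w) \<in> carrier_mat (2^Suc r') (2^Suc r')"
         "suslin_bar (Suc r') (vtl v) (vtl w) \<in> carrier_mat (2^Suc r') (2^Suc r')"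
      using less[of "Suc r'"] 3 by auto
    have e: "2 ^ Suc (Suc r') = 2 ^ Suc r' + (2::nat) ^ Suc r'" by simp
    show ?thesis unfolding 3 e using IH
      by (auto intro!: four_block_carrier_mat)
  qed
qed

lemma suslin_carrier'[simp]: "suslin r v w \<in> carrier_mat (2^r) (2^r)" "suslin_bar r v w \<in> carrier_mat (2^r) (2^r)"
  using suslin_carrier by auto

lemma suslin_dims[simp]: "dim_row (suslin r v w) = 2^r" "dim_col (suslin r v w) = 2^r"
  "dim_row (suslin_bar r v w) = 2^r" "dim_col (suslin_bar r v w) = 2^r"
  using carrier_matD[OF suslin_carrier'(1)[of r v w]] carrier_matD[OF suslin_carrier'(2)[of r v w]] by auto

lemma vtl_lin: assumes "dim_vec v1 = Suc r" "dim_vec v2 = Suc r"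
  shows "vtl (v1 + d \<cdot>\<^sub>v v2) = vtl v1 + d \<cdot>\<^sub>v vtl v2"
  by (rule eq_vecI) (use assms in \<open>auto simp: vtl_def\<close>)

lemma suslin_lin:
  assumes "dim_vec v1 = Suc r" "dim_vec v2 = Suc r" "dim_vec w1 = Suc r" "dim_vec w2 = Suc r"
  shows "suslin r (v1 + d \<cdot>\<^sub>v v2) (w1 + d \<cdot>\<^sub>v w2) = suslin r v1 w1 + d \<cdot>\<^sub>m suslin r v2 w2 \<and>
         suslin_bar r (v1 + d \<cdot>\<^sub>v v2) (w1 + d \<cdot>\<^sub>v w2) = suslin_bar r v1 w1 + d \<cdot>\<^sub>m suslin_bar r v2 w2"
  using assms
proof (induction r arbitrary: v1 v2 w1 w2 rule: less_induct)
  case (less r)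
  consider "r = 0" | "r = Suc 0" | r' where "r = Suc (Suc r')"
    by (metis not0_implies_Suc)
  then show ?case
  proof cases
    case 1 then show ?thesis using less.prems by (auto intro!: eq_matI)
  next
    case 2
    have lt2: "i < 2 \<Longrightarrow> i = 0 \<or> i = 1" for i :: nat by auto
    show ?thesis using less.prems 2
      by (auto intro!: eq_matI simp: mat_of_rows_list_def less_Suc_eq numeral_2_eq_2)
  next
    case 3
    have IH: "suslin (Suc r') (vtl (v1 + d \<cdot>\<^sub>v v2)) (vtl (w1 + d \<cdot>\<^sub>v w2)) = suslin (Suc r') (vtl v1) (vtl w1) + d \<cdot>\<^sub>m suslin (Suc r') (vtl v2) (vtl w2)"
      "suslin_bar (Suc r') (vtl (v1 + d \<cdot>\<^sub>v v2)) (vtl (w1 + d \<cdot>\<^sub>v w2)) = suslin_bar (Suc r') (vtl v1) (vtl w1) + d \<cdot>\<^sub>m suslin_bar (Suc r') (vtl v2) (vtl w2)"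
      using less.IH[of "Suc r'" "vtl v1" "vtl v2" "vtl w1" "vtl w2"] less.prems 3
      by (auto simp: vtl_lin)
    show ?thesis unfolding 3 suslin.simps suslin_bar.simps IH
      using less.prems 3
      by (auto intro!: eq_matI simp: algebra_simps)
  qed
qed

lemma scalar_prod_vtl: assumes "dim_vec v = Suc n" "dim_vec w = Suc n"
  shows "v \<bullet> w = v $ 0 * w $ 0 + vtl v \<bullet> vtl w"
  using assms by (simp add: scalar_prod_def sum.atLeast0_lessThan_Suc_shift del: sum.op_ivl_Suc)

lemma suslin_prod:
  assumes "dim_vec v = Suc r" "dim_vec w = Suc r"
  shows "suslin r v w * suslin_bar r v w = (v \<bullet> w) \<cdot>\<^sub>m 1\<^sub>m (2^r) \<and>
         suslin_bar r v w * suslin r v w = (v \<bullet> w) \<cdot>\<^sub>m 1\<^sub>m (2^r)"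
  using assms
proof (induction r arbitrary: v w rule: less_induct)
  case (less r)
  consider "r = 0" | "r = Suc 0" | r' where "r = Suc (Suc r')"
    by (metis not0_implies_Suc)
  then show ?case
  proof cases
    case 1 then show ?thesis using less.prems by (auto intro!: eq_matI simp: scalar_prod_def)
  next
    case 2
    show ?thesis using less.prems 2
      by (auto intro!: eq_matI simp: mat_of_rows_list_def less_Suc_eq numeral_2_eq_2 scalar_prod_def algebra_simps)
  next
    case 3
    define N where "N = (2::nat) ^ Suc r'"
    define S where "S = suslin (Suc r') (vtl v) (vtl w)"
    define Sb where "Sb = suslin_bar (Suc r') (vtl v) (vtl w)"
    have cS: "S \<in> carrier_mat N N" "Sb \<in> carrier_mat N N" unfolding S_def Sb_def N_def by auto
    have IH: "S * Sb = (vtl v \<bullet> vtl w) \<cdot>\<^sub>m 1\<^sub>m N" "Sb * S = (vtl v \<bullet> vtl w) \<cdot>\<^sub>m 1\<^sub>m N"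
      using less.IH[of "Suc r'" "vtl v" "vtl w"] less.prems 3 unfolding S_def Sb_def N_def by auto
    have vw: "v \<bullet> w = v $ 0 * w $ 0 + vtl v \<bullet> vtl w" using less.prems by (intro scalar_prod_vtl)
    have e: "2 ^ r = N + N" unfolding 3 N_def by simp
    have m1: "suslin r v w * suslin_bar r v w = four_block_mat
       (v $ 0 \<cdot>\<^sub>m 1\<^sub>m N * (w $ 0 \<cdot>\<^sub>m 1\<^sub>m N) + S * Sb) (v $ 0 \<cdot>\<^sub>m 1\<^sub>m N * (- S) + S * (v $ 0 \<cdot>\<^sub>m 1\<^sub>m N))
       ((- Sb) * (w $ 0 \<cdot>\<^sub>m 1\<^sub>m N) + w $ 0 \<cdot>\<^sub>m 1\<^sub>m N * Sb) ((- Sb) * (- S) + w $ 0 \<cdot>\<^sub>m 1\<^sub>m N * (v $ 0 \<cdot>\<^sub>m 1\<^sub>m N))"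
      unfolding 3 suslin.simps suslin_bar.simps S_def[symmetric] Sb_def[symmetric] N_def[symmetric]
      by (rule mult_four_block_mat) (use cS in auto)
    have m2: "suslin_bar r v w * suslin r v w = four_block_mat
       (w $ 0 \<cdot>\<^sub>m 1\<^sub>m N * (v $ 0 \<cdot>\<^sub>m 1\<^sub>m N) + (- S) * (- Sb)) (w $ 0 \<cdot>\<^sub>m 1\<^sub>m N * S + (- S) * (w $ 0 \<cdot>\<^sub>m 1\<^sub>m N))
       (Sb * (v $ 0 \<cdot>\<^sub>m 1\<^sub>m N) + v $ 0 \<cdot>\<^sub>m 1\<^sub>m N * (- Sb)) (Sb * S + v $ 0 \<cdot>\<^sub>m 1\<^sub>m N * (w $ 0 \<cdot>\<^sub>m 1\<^sub>m N))"
      unfolding 3 suslin.simps suslin_bar.simps S_def[symmetric] Sb_def[symmetric] N_def[symmetric]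
      by (rule mult_four_block_mat) (use cS in auto)
    have neg: "(- A) * (- B) = A * B" if "A \<in> carrier_mat N N" "B \<in> carrier_mat N N" for A B :: "'a mat"
      using that by simp
    show ?thesis unfolding m1 m2 e neg[OF cS(1) cS(2)] neg[OF cS(2) cS(1)] IH vw
      using cS
      by (auto intro!: eq_matI simp: mult_smult_assoc_mat[of _ N N] mult_smult_distrib[of _ N N] algebra_simps)
  qed
qed


lemma suslin_polar:
  assumes d: "dim_vec v1 = Suc r" "dim_vec v2 = Suc r" "dim_vec w1 = Suc r" "dim_vec w2 = Suc r"
  shows "suslin r v1 w1 * suslin_bar r v2 w2 + suslin r v2 w2 * suslin_bar r v1 w1 = (v1 \<bullet> w2 + v2 \<bullet> w1) \<cdot>\<^sub>m 1\<^sub>m (2^r) \<and>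
         suslin_bar r v1 w1 * suslin r v2 w2 + suslin_bar r v2 w2 * suslin r v1 w1 = (v1 \<bullet> w2 + v2 \<bullet> w1) \<cdot>\<^sub>m 1\<^sub>m (2^r)"
proof -
  define N where "N = (2::nat)^r"
  define S1 where "S1 = suslin r v1 w1"
  define S2 where "S2 = suslin r v2 w2"
  define B1 where "B1 = suslin_bar r v1 w1"
  define B2 where "B2 = suslin_bar r v2 w2"
  have c: "S1 \<in> carrier_mat N N" "S2 \<in> carrier_mat N N" "B1 \<in> carrier_mat N N" "B2 \<in> carrier_mat N N"
    unfolding S1_def S2_def B1_def B2_def N_def by auto
  have ev: "1 \<cdot>\<^sub>v x = x" for x :: "'a vec" by (rule eq_vecI) auto
  have em: "1 \<cdot>\<^sub>m A = A" for A :: "'a mat" by (rule eq_matI) auto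
  have lin: "suslin r (v1 + v2) (w1 + w2) = S1 + S2" "suslin_bar r (v1 + v2) (w1 + w2) = B1 + B2"
    using suslin_lin[OF d, of 1] unfolding ev em S1_def S2_def B1_def B2_def by simp_all
  have dd: "dim_vec (v1 + v2) = Suc r" "dim_vec (w1 + w2) = Suc r" using d by auto
  have p: "(S1 + S2) * (B1 + B2) = ((v1 + v2) \<bullet> (w1 + w2)) \<cdot>\<^sub>m 1\<^sub>m N"
          "(B1 + B2) * (S1 + S2) = ((v1 + v2) \<bullet> (w1 + w2)) \<cdot>\<^sub>m 1\<^sub>m N"
    using suslin_prod[OF dd] unfolding lin N_def by auto
  have p1: "S1 * B1 = (v1 \<bullet> w1) \<cdot>\<^sub>m 1\<^sub>m N" "B1 * S1 = (v1 \<bullet> w1) \<cdot>\<^sub>m 1\<^sub>m N"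
    using suslin_prod[of v1 r w1] d unfolding S1_def B1_def N_def by auto
  have p2: "S2 * B2 = (v2 \<bullet> w2) \<cdot>\<^sub>m 1\<^sub>m N" "B2 * S2 = (v2 \<bullet> w2) \<cdot>\<^sub>m 1\<^sub>m N"
    using suslin_prod[of v2 r w2] d unfolding S2_def B2_def N_def by auto
  have cv: "v1 \<in> carrier_vec (Suc r)" "v2 \<in> carrier_vec (Suc r)" "w1 \<in> carrier_vec (Suc r)" "w2 \<in> carrier_vec (Suc r)"
    by (rule carrier_vecI, rule d)+
  have cw: "w1 + w2 \<in> carrier_vec (Suc r)" by (rule add_carrier_vec[OF cv(3) cv(4)])
  have vw: "(v1 + v2) \<bullet> (w1 + w2) = v1 \<bullet> w1 + v1 \<bullet> w2 + v2 \<bullet> w1 + v2 \<bullet> w2"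
    unfolding add_scalar_prod_distrib[OF cv(1) cv(2) cw] scalar_prod_add_distrib[OF cv(1) cv(3) cv(4)]
      scalar_prod_add_distrib[OF cv(2) cv(3) cv(4)] by (simp add: add.assoc)
  have cB: "B1 + B2 \<in> carrier_mat N N" and cS: "S1 + S2 \<in> carrier_mat N N" using c by simp_all
  have x1: "(S1 + S2) * (B1 + B2) = S1 * B1 + S1 * B2 + (S2 * B1 + S2 * B2)"
    unfolding add_mult_distrib_mat[OF c(1) c(2) cB] mult_add_distrib_mat[OF c(1) c(3) c(4)]
      mult_add_distrib_mat[OF c(2) c(3) c(4)] ..
  have x2: "(B1 + B2) * (S1 + S2) = B1 * S1 + B1 * S2 + (B2 * S1 + B2 * S2)"
    unfolding add_mult_distrib_mat[OF c(3) c(4) cS] mult_add_distrib_mat[OF c(3) c(1) c(2)]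
      mult_add_distrib_mat[OF c(4) c(1) c(2)] ..
  have "S1 * B2 + S2 * B1 = (v1 \<bullet> w2 + v2 \<bullet> w1) \<cdot>\<^sub>m 1\<^sub>m N"
  proof (rule eq_matI)
    fix i j assume ij: "i < dim_row ((v1 \<bullet> w2 + v2 \<bullet> w1) \<cdot>\<^sub>m 1\<^sub>m N)" "j < dim_col ((v1 \<bullet> w2 + v2 \<bullet> w1) \<cdot>\<^sub>m 1\<^sub>m N)"
    have "S1 * B1 + S1 * B2 + (S2 * B1 + S2 * B2) = ((v1 + v2) \<bullet> (w1 + w2)) \<cdot>\<^sub>m 1\<^sub>m N"
      using p(1) unfolding x1 .
    then have "(S1 * B1 + S1 * B2 + (S2 * B1 + S2 * B2)) $$ (i,j) = (((v1 + v2) \<bullet> (w1 + w2)) \<cdot>\<^sub>m 1\<^sub>m N) $$ (i,j)"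
      by (rule arg_cong)
    then show "(S1 * B2 + S2 * B1) $$ (i,j) = ((v1 \<bullet> w2 + v2 \<bullet> w1) \<cdot>\<^sub>m 1\<^sub>m N) $$ (i,j)"
      using ij c unfolding p1 p2 vw by (simp add: algebra_simps)
  qed (use c in auto)
  moreover have "B1 * S2 + B2 * S1 = (v1 \<bullet> w2 + v2 \<bullet> w1) \<cdot>\<^sub>m 1\<^sub>m N"
  proof (rule eq_matI)
    fix i j assume ij: "i < dim_row ((v1 \<bullet> w2 + v2 \<bullet> w1) \<cdot>\<^sub>m 1\<^sub>m N)" "j < dim_col ((v1 \<bullet> w2 + v2 \<bullet> w1) \<cdot>\<^sub>m 1\<^sub>m N)"
    have "B1 * S1 + B1 * S2 + (B2 * S1 + B2 * S2) = ((v1 + v2) \<bullet> (w1 + w2)) \<cdot>\<^sub>m 1\<^sub>m N"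
      using p(2) unfolding x2 .
    then have "(B1 * S1 + B1 * S2 + (B2 * S1 + B2 * S2)) $$ (i,j) = (((v1 + v2) \<bullet> (w1 + w2)) \<cdot>\<^sub>m 1\<^sub>m N) $$ (i,j)"
      by (rule arg_cong)
    then show "(B1 * S2 + B2 * S1) $$ (i,j) = ((v1 \<bullet> w2 + v2 \<bullet> w1) \<cdot>\<^sub>m 1\<^sub>m N) $$ (i,j)"
      using ij c unfolding p1 p2 vw by (simp add: algebra_simps)
  qed (use c in auto)
  ultimately show ?thesis unfolding S1_def S2_def B1_def B2_def N_def by (rule conjI)
qed


lemma blocks1:
  fixes S' B' E Eb :: "'a::comm_ring_1 mat"
  assumes cS: "S' \<in> carrier_mat N N" and cB: "B' \<in> carrier_mat N N"
    and cE: "E \<in> carrier_mat N N" and cEb: "Eb \<in> carrier_mat N N"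
    and EE: "E * Eb = 0\<^sub>m N N"
    and P: "E * B' + S' * Eb = t \<cdot>\<^sub>m 1\<^sub>m N"
  shows "four_block_mat (1\<^sub>m N) ((-c) \<cdot>\<^sub>m E) (0\<^sub>m N N) (1\<^sub>m N) * four_block_mat (a \<cdot>\<^sub>m 1\<^sub>m N) S' (- B') (b \<cdot>\<^sub>m 1\<^sub>m N)
     * four_block_mat (1\<^sub>m N) (0\<^sub>m N N) (- ((-c) \<cdot>\<^sub>m Eb)) (1\<^sub>m N)
   = four_block_mat ((a + c * t) \<cdot>\<^sub>m 1\<^sub>m N) (S' + (- (b * c)) \<cdot>\<^sub>m E) (- (B' + (- (b * c)) \<cdot>\<^sub>m Eb)) (b \<cdot>\<^sub>m 1\<^sub>m N)"
proof -
  have Pe: "(E * B') $$ (i,j) = t * (if i = j then 1 else 0) - (S' * Eb) $$ (i,j)" if "i < N" "j < N" for i j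
  proof -
    have "(E * B' + S' * Eb) $$ (i,j) = (t \<cdot>\<^sub>m 1\<^sub>m N) $$ (i,j)" using P by simp
    then show ?thesis using that cS cB cE cEb by (simp add: algebra_simps)
  qed
  have Pe': "row E i \<bullet> col B' j = t * (if i = j then 1 else 0) - row S' i \<bullet> col Eb j" if "i < N" "j < N" for i j
    using Pe[OF that] that cS cB cE cEb by simp
  have d1: "(S' + d \<cdot>\<^sub>m E) * Eb = S' * Eb + d \<cdot>\<^sub>m (E * Eb)" for d
    using cS cE cEb by (simp add: add_mult_distrib_mat[of _ N N] mult_smult_assoc_mat[of _ N N])
  have s1: "four_block_mat (1\<^sub>m N) ((-c) \<cdot>\<^sub>m E) (0\<^sub>m N N) (1\<^sub>m N) * four_block_mat (a \<cdot>\<^sub>m 1\<^sub>m N) S' (- B') (b \<cdot>\<^sub>m 1\<^sub>m N)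
     = four_block_mat (a \<cdot>\<^sub>m 1\<^sub>m N + c \<cdot>\<^sub>m (E * B')) (S' + (- (b * c)) \<cdot>\<^sub>m E) (- B') (b \<cdot>\<^sub>m 1\<^sub>m N)"
    apply (subst mult_four_block_mat[of _ N N _ N _ N _ _ N _ N])
    using cS cB cE cEb apply (simp_all)[8]
    apply (rule cong_four_block_mat)
    using cS cB cE cEb by (auto intro!: eq_matI simp: mult_smult_assoc_mat[of _ N N] mult_smult_distrib[of _ N N])
  have s2: "four_block_mat (a \<cdot>\<^sub>m 1\<^sub>m N + c \<cdot>\<^sub>m (E * B')) (S' + (- (b * c)) \<cdot>\<^sub>m E) (- B') (b \<cdot>\<^sub>m 1\<^sub>m N)
     * four_block_mat (1\<^sub>m N) (0\<^sub>m N N) (- ((-c) \<cdot>\<^sub>m Eb)) (1\<^sub>m N)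
     = four_block_mat ((a + c * t) \<cdot>\<^sub>m 1\<^sub>m N) (S' + (- (b * c)) \<cdot>\<^sub>m E) (- (B' + (- (b * c)) \<cdot>\<^sub>m Eb)) (b \<cdot>\<^sub>m 1\<^sub>m N)"
    apply (subst mult_four_block_mat[of _ N N _ N _ N _ _ N _ N])
    using cS cB cE cEb apply (simp_all)[8]
    apply (rule cong_four_block_mat)
    using cS cB cE cEb apply (auto intro!: eq_matI simp: mult_smult_assoc_mat[of _ N N] mult_smult_distrib[of _ N N] d1 EE Pe' algebra_simps)
    done
  show ?thesis using s1 s2 by simp
qed

lemma blocks2:
  fixes S' B' E Eb :: "'a::comm_ring_1 mat"
  assumes cS: "S' \<in> carrier_mat N N" and cB: "B' \<in> carrier_mat N N"
    and cE: "E \<in> carrier_mat N N" and cEb: "Eb \<in> carrier_mat N N"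
    and EE: "Eb * E = 0\<^sub>m N N"
    and P: "Eb * S' + B' * E = t \<cdot>\<^sub>m 1\<^sub>m N"
  shows "four_block_mat (1\<^sub>m N) (0\<^sub>m N N) (- ((-c) \<cdot>\<^sub>m Eb)) (1\<^sub>m N) * four_block_mat (a \<cdot>\<^sub>m 1\<^sub>m N) S' (- B') (b \<cdot>\<^sub>m 1\<^sub>m N)
     * four_block_mat (1\<^sub>m N) ((-c) \<cdot>\<^sub>m E) (0\<^sub>m N N) (1\<^sub>m N)
   = four_block_mat (a \<cdot>\<^sub>m 1\<^sub>m N) (S' + (- (a * c)) \<cdot>\<^sub>m E) (- (B' + (- (a * c)) \<cdot>\<^sub>m Eb)) ((b + c * t) \<cdot>\<^sub>m 1\<^sub>m N)"
proof -
  have Pe: "(Eb * S') $$ (i,j) = t * (if i = j then 1 else 0) - (B' * E) $$ (i,j)" if "i < N" "j < N" for i j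
  proof -
    have "(Eb * S' + B' * E) $$ (i,j) = (t \<cdot>\<^sub>m 1\<^sub>m N) $$ (i,j)" using P by simp
    then show ?thesis using that cS cB cE cEb by (simp add: algebra_simps)
  qed
  have Pe': "row Eb i \<bullet> col S' j = t * (if i = j then 1 else 0) - row B' i \<bullet> col E j" if "i < N" "j < N" for i j
    using Pe[OF that] that cS cB cE cEb by simp
  have d1: "(B' + d \<cdot>\<^sub>m Eb) * E = B' * E + d \<cdot>\<^sub>m (Eb * E)" for d
    using cB cE cEb by (simp add: add_mult_distrib_mat[of _ N N] mult_smult_assoc_mat[of _ N N])
  have s1: "four_block_mat (1\<^sub>m N) (0\<^sub>m N N) (- ((-c) \<cdot>\<^sub>m Eb)) (1\<^sub>m N) * four_block_mat (a \<cdot>\<^sub>m 1\<^sub>m N) S' (- B') (b \<cdot>\<^sub>m 1\<^sub>m N)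
     = four_block_mat (a \<cdot>\<^sub>m 1\<^sub>m N) S' (- (B' + (- (a * c)) \<cdot>\<^sub>m Eb)) (b \<cdot>\<^sub>m 1\<^sub>m N + c \<cdot>\<^sub>m (Eb * S'))"
    apply (subst mult_four_block_mat[of _ N N _ N _ N _ _ N _ N])
    using cS cB cE cEb apply (simp_all)[8]
    apply (rule cong_four_block_mat)
    using cS cB cE cEb by (auto intro!: eq_matI simp: mult_smult_assoc_mat[of _ N N] mult_smult_distrib[of _ N N] algebra_simps)
  have s2: "four_block_mat (a \<cdot>\<^sub>m 1\<^sub>m N) S' (- (B' + (- (a * c)) \<cdot>\<^sub>m Eb)) (b \<cdot>\<^sub>m 1\<^sub>m N + c \<cdot>\<^sub>m (Eb * S'))
     * four_block_mat (1\<^sub>m N) ((-c) \<cdot>\<^sub>m E) (0\<^sub>m N N) (1\<^sub>m N)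
     = four_block_mat (a \<cdot>\<^sub>m 1\<^sub>m N) (S' + (- (a * c)) \<cdot>\<^sub>m E) (- (B' + (- (a * c)) \<cdot>\<^sub>m Eb)) ((b + c * t) \<cdot>\<^sub>m 1\<^sub>m N)"
    apply (subst mult_four_block_mat[of _ N N _ N _ N _ _ N _ N])
    using cS cB cE cEb apply (simp_all)[8]
    apply (rule cong_four_block_mat)
    using cS cB cE cEb apply (auto intro!: eq_matI simp: mult_smult_assoc_mat[of _ N N] mult_smult_distrib[of _ N N] d1 EE Pe' algebra_simps)
    done
  show ?thesis using s1 s2 by simp
qed


lemma suslin_form:
  assumes n: "n = Suc (Suc r')"
  shows "suslin n V W = four_block_mat (V $ 0 \<cdot>\<^sub>m 1\<^sub>m (2^(n-1))) (suslin (n-1) (vtl V) (vtl W))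
     (- suslin_bar (n-1) (vtl V) (vtl W)) (W $ 0 \<cdot>\<^sub>m 1\<^sub>m (2^(n-1)))"
  unfolding n by simp

lemma finish1:
  fixes v w p q V W :: "'a::comm_ring_1 vec"
  assumes n: "n = Suc (Suc r')"
    and dv: "dim_vec v = n + 1" "dim_vec w = n + 1" and dp: "dim_vec p = n" "dim_vec q = n"
    and pq: "p \<bullet> q = 0"
    and t: "t = p \<bullet> vtl w + vtl v \<bullet> q"
    and V0: "V $ 0 = v $ 0 + c * t" and W0: "W $ 0 = w $ 0"
    and Vt: "vtl V = vtl v + (- (w $ 0 * c)) \<cdot>\<^sub>v p" and Wt: "vtl W = vtl w + (- (w $ 0 * c)) \<cdot>\<^sub>v q"
  shows "four_block_mat (1\<^sub>m (2^(n-1))) ((-c) \<cdot>\<^sub>m suslin (n-1) p q) (0\<^sub>m (2^(n-1)) (2^(n-1))) (1\<^sub>m (2^(n-1)))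
     * suslin n v w * four_block_mat (1\<^sub>m (2^(n-1))) (0\<^sub>m (2^(n-1)) (2^(n-1))) (- ((-c) \<cdot>\<^sub>m suslin_bar (n-1) p q)) (1\<^sub>m (2^(n-1)))
   = suslin n V W"
proof -
  define N where "N = (2::nat)^(n-1)"
  have d1: "dim_vec (vtl v) = Suc (n-1)" "dim_vec (vtl w) = Suc (n-1)" "dim_vec p = Suc (n-1)" "dim_vec q = Suc (n-1)"
    using dv dp n by auto
  have EE: "suslin (n-1) p q * suslin_bar (n-1) p q = 0\<^sub>m N N"
    using suslin_prod[OF d1(3) d1(4)] unfolding pq N_def by (auto intro!: eq_matI)
  have P: "suslin (n-1) p q * suslin_bar (n-1) (vtl v) (vtl w) + suslin (n-1) (vtl v) (vtl w) * suslin_bar (n-1) p q = t \<cdot>\<^sub>m 1\<^sub>m N"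
    using suslin_polar[OF d1(3) d1(1) d1(4) d1(2)] unfolding t N_def by simp
  have L: "suslin (n-1) (vtl V) (vtl W) = suslin (n-1) (vtl v) (vtl w) + (- (w $ 0 * c)) \<cdot>\<^sub>m suslin (n-1) p q"
     "suslin_bar (n-1) (vtl V) (vtl W) = suslin_bar (n-1) (vtl v) (vtl w) + (- (w $ 0 * c)) \<cdot>\<^sub>m suslin_bar (n-1) p q"
    unfolding Vt Wt using suslin_lin[OF d1(1) d1(3) d1(2) d1(4)] by auto
  have "four_block_mat (1\<^sub>m N) ((-c) \<cdot>\<^sub>m suslin (n-1) p q) (0\<^sub>m N N) (1\<^sub>m N)
     * four_block_mat (v $ 0 \<cdot>\<^sub>m 1\<^sub>m N) (suslin (n-1) (vtl v) (vtl w)) (- suslin_bar (n-1) (vtl v) (vtl w)) (w $ 0 \<cdot>\<^sub>m 1\<^sub>m N)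
     * four_block_mat (1\<^sub>m N) (0\<^sub>m N N) (- ((-c) \<cdot>\<^sub>m suslin_bar (n-1) p q)) (1\<^sub>m N)
    = four_block_mat ((v $ 0 + c * t) \<cdot>\<^sub>m 1\<^sub>m N) (suslin (n-1) (vtl v) (vtl w) + (- (w $ 0 * c)) \<cdot>\<^sub>m suslin (n-1) p q)
        (- (suslin_bar (n-1) (vtl v) (vtl w) + (- (w $ 0 * c)) \<cdot>\<^sub>m suslin_bar (n-1) p q)) (w $ 0 \<cdot>\<^sub>m 1\<^sub>m N)"
    by (rule blocks1) (use EE P in \<open>auto simp: N_def\<close>)
  then show ?thesis
    unfolding suslin_form[OF n, of v w] suslin_form[OF n, of V W] V0 W0 L N_def by simp
qed

lemma finish2:
  fixes v w p q V W :: "'a::comm_ring_1 vec"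
  assumes n: "n = Suc (Suc r')"
    and dv: "dim_vec v = n + 1" "dim_vec w = n + 1" and dp: "dim_vec p = n" "dim_vec q = n"
    and pq: "p \<bullet> q = 0"
    and t: "t = p \<bullet> vtl w + vtl v \<bullet> q"
    and V0: "V $ 0 = v $ 0" and W0: "W $ 0 = w $ 0 + c * t"
    and Vt: "vtl V = vtl v + (- (v $ 0 * c)) \<cdot>\<^sub>v p" and Wt: "vtl W = vtl w + (- (v $ 0 * c)) \<cdot>\<^sub>v q"
  shows "four_block_mat (1\<^sub>m (2^(n-1))) (0\<^sub>m (2^(n-1)) (2^(n-1))) (- ((-c) \<cdot>\<^sub>m suslin_bar (n-1) p q)) (1\<^sub>m (2^(n-1)))
     * suslin n v w * four_block_mat (1\<^sub>m (2^(n-1))) ((-c) \<cdot>\<^sub>m suslin (n-1) p q) (0\<^sub>m (2^(n-1)) (2^(n-1))) (1\<^sub>m (2^(n-1)))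
   = suslin n V W"
proof -
  define N where "N = (2::nat)^(n-1)"
  have d1: "dim_vec (vtl v) = Suc (n-1)" "dim_vec (vtl w) = Suc (n-1)" "dim_vec p = Suc (n-1)" "dim_vec q = Suc (n-1)"
    using dv dp n by auto
  have EE: "suslin_bar (n-1) p q * suslin (n-1) p q = 0\<^sub>m N N"
    using suslin_prod[OF d1(3) d1(4)] unfolding pq N_def by (auto intro!: eq_matI)
  have P: "suslin_bar (n-1) p q * suslin (n-1) (vtl v) (vtl w) + suslin_bar (n-1) (vtl v) (vtl w) * suslin (n-1) p q = t \<cdot>\<^sub>m 1\<^sub>m N"
    using suslin_polar[OF d1(3) d1(1) d1(4) d1(2)] unfolding t N_def by simp
  have L: "suslin (n-1) (vtl V) (vtl W) = suslin (n-1) (vtl v) (vtl w) + (- (v $ 0 * c)) \<cdot>\<^sub>m suslin (n-1) p q"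
     "suslin_bar (n-1) (vtl V) (vtl W) = suslin_bar (n-1) (vtl v) (vtl w) + (- (v $ 0 * c)) \<cdot>\<^sub>m suslin_bar (n-1) p q"
    unfolding Vt Wt using suslin_lin[OF d1(1) d1(3) d1(2) d1(4)] by auto
  have "four_block_mat (1\<^sub>m N) (0\<^sub>m N N) (- ((-c) \<cdot>\<^sub>m suslin_bar (n-1) p q)) (1\<^sub>m N)
     * four_block_mat (v $ 0 \<cdot>\<^sub>m 1\<^sub>m N) (suslin (n-1) (vtl v) (vtl w)) (- suslin_bar (n-1) (vtl v) (vtl w)) (w $ 0 \<cdot>\<^sub>m 1\<^sub>m N)
     * four_block_mat (1\<^sub>m N) ((-c) \<cdot>\<^sub>m suslin (n-1) p q) (0\<^sub>m N N) (1\<^sub>m N)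
    = four_block_mat (v $ 0 \<cdot>\<^sub>m 1\<^sub>m N) (suslin (n-1) (vtl v) (vtl w) + (- (v $ 0 * c)) \<cdot>\<^sub>m suslin (n-1) p q)
        (- (suslin_bar (n-1) (vtl v) (vtl w) + (- (v $ 0 * c)) \<cdot>\<^sub>m suslin_bar (n-1) p q)) ((w $ 0 + c * t) \<cdot>\<^sub>m 1\<^sub>m N)"
    by (rule blocks2) (use EE P in \<open>auto simp: N_def\<close>)
  then show ?thesis
    unfolding suslin_form[OF n, of v w] suslin_form[OF n, of V W] V0 W0 L N_def by simp
qed


lemma rowmult_idp: assumes "dim_vec v = m"
  shows "v \<^sub>r* idp m M = vec m (\<lambda>j. v $ j + (\<Sum>i<m. v $ i * M i j))"
proof (rule eq_vecI)
  fix j assume j: "j < dim_vec (vec m (\<lambda>j. v $ j + (\<Sum>i<m. v $ i * M i j)))"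
  hence j: "j < m" by simp
  have "(v \<^sub>r* idp m M) $ j = (\<Sum>i<m. v $ i * ((if i = j then 1 else 0) + M i j))"
    using j assms by (simp add: row_mult_def scalar_prod_def atLeast0LessThan)
  also have "\<dots> = (\<Sum>i<m. (if i = j then v $ i else 0) + v $ i * M i j)"
    by (rule sum.cong) (auto simp: algebra_simps)
  also have "\<dots> = v $ j + (\<Sum>i<m. v $ i * M i j)"
    using j by (simp add: sum.distrib)
  finally show "(v \<^sub>r* idp m M) $ j = vec m (\<lambda>j. v $ j + (\<Sum>i<m. v $ i * M i j)) $ j"
    using j by simp
qed (simp add: row_mult_def)

lemma witness:
  fixes v w :: "'a::comm_ring_1 vec" and x y :: "nat \<Rightarrow> 'a"
  assumes dv: "dim_vec v = m" "dim_vec w = m"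
    and xy: "(\<Sum>l<m. x l * y l) = 0"
    and el: "idp m (\<lambda>i j. x i * y j) \<in> elem_group m"
    and Q: "Q (vec m (\<lambda>j. v $ j + (\<Sum>i<m. v $ i * x i) * y j)) (vec m (\<lambda>j. w $ j - (\<Sum>i<m. w $ i * y i) * x j))"
  shows "\<exists>\<epsilon> \<in> elem_group m. \<exists>\<rho>. \<rho> \<in> carrier_mat m m \<and> \<rho> * transpose_mat \<epsilon> = 1\<^sub>m m \<and>
            transpose_mat \<epsilon> * \<rho> = 1\<^sub>m m \<and> Q (v \<^sub>r* \<epsilon>) (w \<^sub>r* \<rho>)"
proof (intro bexI exI conjI)
  let ?e = "idp m (\<lambda>i j. x i * y j)"
  let ?r = "idp m (\<lambda>i j. - (y i * x j))"
  have T: "transpose_mat ?e = idp m (\<lambda>i j. y i * x j)"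
    unfolding transpose_idp by (rule idp_cong) (simp add: mult.commute)
  show "?r \<in> carrier_mat m m" by simp
  show "?r * transpose_mat ?e = 1\<^sub>m m"
    unfolding T idp_mult idp_zero[symmetric]
  proof (rule idp_cong)
    fix i j
    have "(\<Sum>l<m. - (y i * x l) * (y l * x j)) = (- (y i * x j)) * (\<Sum>l<m. x l * y l)"
      unfolding sum_distrib_left by (rule sum.cong) (auto simp: algebra_simps)
    then show "- (y i * x j) + y i * x j + (\<Sum>l<m. - (y i * x l) * (y l * x j)) = 0"
      using xy by simp
  qed
  show "transpose_mat ?e * ?r = 1\<^sub>m m"
    unfolding T idp_mult idp_zero[symmetric]
  proof (rule idp_cong)
    fix i j
    have "(\<Sum>l<m. y i * x l * - (y l * x j)) = (- (y i * x j)) * (\<Sum>l<m. x l * y l)"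
      unfolding sum_distrib_left by (rule sum.cong) (auto simp: algebra_simps)
    then show "y i * x j + - (y i * x j) + (\<Sum>l<m. y i * x l * - (y l * x j)) = 0"
      using xy by simp
  qed
  have V: "v \<^sub>r* ?e = vec m (\<lambda>j. v $ j + (\<Sum>i<m. v $ i * x i) * y j)"
    unfolding rowmult_idp[OF dv(1)] sum_distrib_right
    by (rule eq_vecI) (auto simp: algebra_simps)
  have W: "w \<^sub>r* ?r = vec m (\<lambda>j. w $ j - (\<Sum>i<m. w $ i * y i) * x j)"
    unfolding rowmult_idp[OF dv(2)] sum_distrib_right
    by (rule eq_vecI) (auto simp: algebra_simps sum_negf)
  show "Q (v \<^sub>r* ?e) (w \<^sub>r* ?r)" unfolding V W by (rule Q)
  show "?e \<in> elem_group m" by (rule el)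
qed


lemma sd1: "a < (m::nat) \<Longrightarrow> (\<Sum>i<m. f i * (if i = a then d else 0)) = f a * (d::'a::comm_ring_1)"
proof -
  assume a: "a < m"
  have "(\<Sum>i<m. f i * (if i = a then d else 0)) = (\<Sum>i<m. if i = a then f a * d else 0)"
    by (rule sum.cong) auto
  also have "\<dots> = f a * d" using a by (simp add: sum.delta)
  finally show ?thesis .
qed

lemma sd3: assumes "k \<noteq> 0" "k < (m::nat)"
  shows "(\<Sum>i<m. f i * (c * (if i = 0 then A else if i = k then B else 0))) = f 0 * (c * A) + f k * (c * (B::'a::comm_ring_1))"
proof -
  have "(\<Sum>i<m. f i * (c * (if i = 0 then A else if i = k then B else 0))) =
        (\<Sum>i<m. (if i = 0 then f 0 * (c * A) else 0) + (if i = k then f k * (c * B) else 0))"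
    by (rule sum.cong) (use assms in auto)
  also have "\<dots> = f 0 * (c * A) + f k * (c * B)" using assms by (simp add: sum.distrib sum.delta)
  finally show ?thesis .
qed

lemma common_facts:
  fixes v w :: "'a::comm_ring_1 vec"
  assumes dv: "dim_vec v = n + 1" "dim_vec w = n + 1" and k: "1 \<le> k" "k \<le> n"
  shows "unit_vec n (k - 1) \<bullet> vtl w = w $ k" "vtl v \<bullet> unit_vec n (k - 1) = v $ k"
    "unit_vec n (k - 1) \<bullet> 0\<^sub>v n = 0" "0\<^sub>v n \<bullet> unit_vec n (k - 1) = 0"
    "vtl v \<bullet> 0\<^sub>v n = 0" "0\<^sub>v n \<bullet> vtl w = 0"
proof -
  have c: "vtl w \<in> carrier_vec n" "vtl v \<in> carrier_vec n" "unit_vec n (k - 1) \<in> carrier_vec n"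
    by (rule carrier_vecI, use dv in simp)+
  have kk: "k - 1 < n" "Suc (k - 1) = k" using k by auto
  show "unit_vec n (k - 1) \<bullet> vtl w = w $ k"
    unfolding scalar_prod_left_unit[OF c(1) kk(1)] using kk dv by simp
  show "vtl v \<bullet> unit_vec n (k - 1) = v $ k"
    unfolding scalar_prod_right_unit[OF kk(1)] using kk dv by simp
  show "unit_vec n (k - 1) \<bullet> 0\<^sub>v n = 0" by (rule scalar_prod_right_zero[OF c(3)])
  show "0\<^sub>v n \<bullet> unit_vec n (k - 1) = 0" by (rule scalar_prod_left_zero[OF c(3)])
  show "vtl v \<bullet> 0\<^sub>v n = 0" by (rule scalar_prod_right_zero[OF c(2)])
  show "0\<^sub>v n \<bullet> vtl w = 0" by (rule scalar_prod_left_zero[OF c(1)])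
qed

lemma caseE1:
  fixes v w :: "'a::comm_ring_1 vec"
  assumes n: "n = Suc (Suc r')" and dv: "dim_vec v = n + 1" "dim_vec w = n + 1"
    and vw: "v \<bullet> w = 1" and k: "1 \<le> k" "k \<le> n"
    and L: "L = four_block_mat (1\<^sub>m (2^(n-1))) ((-c) \<cdot>\<^sub>m suslin (n-1) (unit_vec n (k - 1)) (0\<^sub>v n)) (0\<^sub>m (2^(n-1)) (2^(n-1))) (1\<^sub>m (2^(n-1)))
     * suslin n v w * four_block_mat (1\<^sub>m (2^(n-1))) (0\<^sub>m (2^(n-1)) (2^(n-1))) (- ((-c) \<cdot>\<^sub>m suslin_bar (n-1) (unit_vec n (k - 1)) (0\<^sub>v n))) (1\<^sub>m (2^(n-1)))"
  shows "\<exists>\<epsilon> \<in> elem_group (n + 1). \<exists>\<rho>. \<rho> \<in> carrier_mat (n + 1) (n + 1) \<and>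
            \<rho> * transpose_mat \<epsilon> = 1\<^sub>m (n + 1) \<and> transpose_mat \<epsilon> * \<rho> = 1\<^sub>m (n + 1) \<and>
            L = suslin n (v \<^sub>r* \<epsilon>) (w \<^sub>r* \<rho>)"
proof -
  define u where "u j = c * (if j = 0 then w $ k else if j = k then - (w $ 0) else 0)" for j
  have k0: "k \<noteq> 0" "k < n + 1" using k by auto
  define l where "l = (if k = 1 then 2 else (1::nat))"
  have l: "l < n + 1" "l \<noteq> 0" "l \<noteq> k" using n k unfolding l_def by auto
  have vw1: "(\<Sum>i<n + 1. v $ i * w $ i) = 1" using vw dv by (simp add: scalar_prod_def atLeast0LessThan)
  have wu: "(\<Sum>i<n + 1. w $ i * u i) = 0" unfolding u_def sd3[OF k0] by (simp add: algebra_simps)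
  note cf = common_facts[OF dv k]
  show ?thesis
  proof (rule witness[where x = "\<lambda>i. w $ i" and y = u and Q = "\<lambda>V W. L = suslin n V W", OF dv])
    show "(\<Sum>l<n + 1. w $ l * u l) = 0" by (rule wu)
    show "idp (n + 1) (\<lambda>i j. w $ i * u j) \<in> elem_group (n + 1)"
      unfolding u_def by (rule elem_core) (use k0 l in auto)
    show "L = suslin n (vec (n + 1) (\<lambda>j. v $ j + (\<Sum>i<n + 1. v $ i * w $ i) * u j))
        (vec (n + 1) (\<lambda>j. w $ j - (\<Sum>i<n + 1. w $ i * u i) * w $ j))"
      unfolding vw1 wu L
    proof (rule finish1[OF n dv, where p = "unit_vec n (k - 1)" and q = "0\<^sub>v n" and t = "w $ k"])
      show "unit_vec n (k - 1) \<bullet> 0\<^sub>v n = 0" by (rule cf(3))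
      show "w $ k = unit_vec n (k - 1) \<bullet> vtl w + vtl v \<bullet> 0\<^sub>v n" using cf by simp
      show "vec (n + 1) (\<lambda>j. v $ j + 1 * u j) $ 0 = v $ 0 + c * w $ k" by (simp add: u_def)
      show "vec (n + 1) (\<lambda>j. w $ j - 0 * w $ j) $ 0 = w $ 0" by simp
      show "vtl (vec (n + 1) (\<lambda>j. v $ j + 1 * u j)) = vtl v + - (w $ 0 * c) \<cdot>\<^sub>v unit_vec n (k - 1)"
        by (rule eq_vecI) (use dv k in \<open>auto simp: u_def vtl_def\<close>)
      show "vtl (vec (n + 1) (\<lambda>j. w $ j - 0 * w $ j)) = vtl w + - (w $ 0 * c) \<cdot>\<^sub>v 0\<^sub>v n"
        by (rule eq_vecI) (use dv in \<open>auto simp: vtl_def\<close>)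
    qed auto
  qed
qed

lemma caseE2:
  fixes v w :: "'a::comm_ring_1 vec"
  assumes n: "n = Suc (Suc r')" and dv: "dim_vec v = n + 1" "dim_vec w = n + 1"
    and vw: "v \<bullet> w = 1" and k: "1 \<le> k" "k \<le> n"
    and L: "L = four_block_mat (1\<^sub>m (2^(n-1))) (0\<^sub>m (2^(n-1)) (2^(n-1))) (- ((-c) \<cdot>\<^sub>m suslin_bar (n-1) (unit_vec n (k - 1)) (0\<^sub>v n))) (1\<^sub>m (2^(n-1)))
     * suslin n v w * four_block_mat (1\<^sub>m (2^(n-1))) ((-c) \<cdot>\<^sub>m suslin (n-1) (unit_vec n (k - 1)) (0\<^sub>v n)) (0\<^sub>m (2^(n-1)) (2^(n-1))) (1\<^sub>m (2^(n-1)))"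
  shows "\<exists>\<epsilon> \<in> elem_group (n + 1). \<exists>\<rho>. \<rho> \<in> carrier_mat (n + 1) (n + 1) \<and>
            \<rho> * transpose_mat \<epsilon> = 1\<^sub>m (n + 1) \<and> transpose_mat \<epsilon> * \<rho> = 1\<^sub>m (n + 1) \<and>
            L = suslin n (v \<^sub>r* \<epsilon>) (w \<^sub>r* \<rho>)"
proof -
  have k0: "k \<noteq> 0" "k < n + 1" using k by auto
  have vw1: "(\<Sum>i<n + 1. v $ i * w $ i) = 1" using vw dv by (simp add: scalar_prod_def atLeast0LessThan)
  have wv1: "(\<Sum>i<n + 1. w $ i * v $ i) = 1" using vw1 by (simp add: mult.commute)
  note cf = common_facts[OF dv k]
  define x where "x i = (if i = 0 then -c else 0)" for i :: nat
  define y where "y j = (if j = k then 1 else (0::'a))" for j :: nat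
  have xy: "(\<Sum>l<n + 1. x l * y l) = 0" by (rule sum.neutral) (use k0 in \<open>auto simp: x_def y_def\<close>)
  have s1: "(\<Sum>i<n + 1. v $ i * x i) = v $ 0 * (-c)" unfolding x_def by (rule sd1) simp
  have s2: "(\<Sum>i<n + 1. w $ i * y i) = w $ k * 1" unfolding y_def by (rule sd1) (use k0 in simp)
  have el: "idp (n + 1) (\<lambda>i j. x i * y j) = addrow_mat (n + 1) (-c) 0 k"
    unfolding addrow_idp by (rule idp_cong) (auto simp: x_def y_def)
  show ?thesis
  proof (rule witness[where x = x and y = y and Q = "\<lambda>V W. L = suslin n V W", OF dv xy])
    show "idp (n + 1) (\<lambda>i j. x i * y j) \<in> elem_group (n + 1)"
      unfolding el by (rule elem_addrow) (use k0 in auto)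
    show "L = suslin n (vec (n + 1) (\<lambda>j. v $ j + (\<Sum>i<n + 1. v $ i * x i) * y j))
        (vec (n + 1) (\<lambda>j. w $ j - (\<Sum>i<n + 1. w $ i * y i) * x j))"
      unfolding s1 s2 L
    proof (rule finish2[OF n dv, where p = "unit_vec n (k - 1)" and q = "0\<^sub>v n" and t = "w $ k"])
      show "unit_vec n (k - 1) \<bullet> 0\<^sub>v n = 0" by (rule cf(3))
      show "w $ k = unit_vec n (k - 1) \<bullet> vtl w + vtl v \<bullet> 0\<^sub>v n" using cf by simp
      show "vec (n + 1) (\<lambda>j. v $ j + v $ 0 * - c * y j) $ 0 = v $ 0" using k0 by (simp add: y_def)
      show "vec (n + 1) (\<lambda>j. w $ j - w $ k * 1 * x j) $ 0 = w $ 0 + c * w $ k" by (simp add: x_def)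
      show "vtl (vec (n + 1) (\<lambda>j. v $ j + v $ 0 * - c * y j)) = vtl v + - (v $ 0 * c) \<cdot>\<^sub>v unit_vec n (k - 1)"
        by (rule eq_vecI) (use dv k in \<open>auto simp: y_def vtl_def\<close>)
      show "vtl (vec (n + 1) (\<lambda>j. w $ j - w $ k * 1 * x j)) = vtl w + - (v $ 0 * c) \<cdot>\<^sub>v 0\<^sub>v n"
        by (rule eq_vecI) (use dv in \<open>auto simp: x_def vtl_def\<close>)
    qed auto
  qed
qed

lemma caseF1:
  fixes v w :: "'a::comm_ring_1 vec"
  assumes n: "n = Suc (Suc r')" and dv: "dim_vec v = n + 1" "dim_vec w = n + 1"
    and vw: "v \<bullet> w = 1" and k: "1 \<le> k" "k \<le> n"
    and L: "L = four_block_mat (1\<^sub>m (2^(n-1))) ((-c) \<cdot>\<^sub>m suslin (n-1) (0\<^sub>v n) (unit_vec n (k - 1))) (0\<^sub>m (2^(n-1)) (2^(n-1))) (1\<^sub>m (2^(n-1)))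
     * suslin n v w * four_block_mat (1\<^sub>m (2^(n-1))) (0\<^sub>m (2^(n-1)) (2^(n-1))) (- ((-c) \<cdot>\<^sub>m suslin_bar (n-1) (0\<^sub>v n) (unit_vec n (k - 1)))) (1\<^sub>m (2^(n-1)))"
  shows "\<exists>\<epsilon> \<in> elem_group (n + 1). \<exists>\<rho>. \<rho> \<in> carrier_mat (n + 1) (n + 1) \<and>
            \<rho> * transpose_mat \<epsilon> = 1\<^sub>m (n + 1) \<and> transpose_mat \<epsilon> * \<rho> = 1\<^sub>m (n + 1) \<and>
            L = suslin n (v \<^sub>r* \<epsilon>) (w \<^sub>r* \<rho>)"
proof -
  have k0: "k \<noteq> 0" "k < n + 1" using k by auto
  have vw1: "(\<Sum>i<n + 1. v $ i * w $ i) = 1" using vw dv by (simp add: scalar_prod_def atLeast0LessThan)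
  have wv1: "(\<Sum>i<n + 1. w $ i * v $ i) = 1" using vw1 by (simp add: mult.commute)
  note cf = common_facts[OF dv k]
  define x where "x i = (if i = k then c else 0)" for i :: nat
  define y where "y j = (if j = 0 then 1 else (0::'a))" for j :: nat
  have xy: "(\<Sum>l<n + 1. x l * y l) = 0" by (rule sum.neutral) (use k0 in \<open>auto simp: x_def y_def\<close>)
  have s1: "(\<Sum>i<n + 1. v $ i * x i) = v $ k * c" unfolding x_def by (rule sd1) (use k0 in simp)
  have s2: "(\<Sum>i<n + 1. w $ i * y i) = w $ 0 * 1" unfolding y_def by (rule sd1) simp
  have el: "idp (n + 1) (\<lambda>i j. x i * y j) = addrow_mat (n + 1) c k 0"
    unfolding addrow_idp by (rule idp_cong) (auto simp: x_def y_def)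
  show ?thesis
  proof (rule witness[where x = x and y = y and Q = "\<lambda>V W. L = suslin n V W", OF dv xy])
    show "idp (n + 1) (\<lambda>i j. x i * y j) \<in> elem_group (n + 1)"
      unfolding el by (rule elem_addrow) (use k0 in auto)
    show "L = suslin n (vec (n + 1) (\<lambda>j. v $ j + (\<Sum>i<n + 1. v $ i * x i) * y j))
        (vec (n + 1) (\<lambda>j. w $ j - (\<Sum>i<n + 1. w $ i * y i) * x j))"
      unfolding s1 s2 L
    proof (rule finish1[OF n dv, where p = "0\<^sub>v n" and q = "unit_vec n (k - 1)" and t = "v $ k"])
      show "0\<^sub>v n \<bullet> unit_vec n (k - 1) = 0" by (rule cf(4))
      show "v $ k = 0\<^sub>v n \<bullet> vtl w + vtl v \<bullet> unit_vec n (k - 1)" using cf by simp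
      show "vec (n + 1) (\<lambda>j. v $ j + v $ k * c * y j) $ 0 = v $ 0 + c * v $ k" by (simp add: y_def)
      show "vec (n + 1) (\<lambda>j. w $ j - w $ 0 * 1 * x j) $ 0 = w $ 0" using k0 by (simp add: x_def)
      show "vtl (vec (n + 1) (\<lambda>j. v $ j + v $ k * c * y j)) = vtl v + - (w $ 0 * c) \<cdot>\<^sub>v 0\<^sub>v n"
        by (rule eq_vecI) (use dv in \<open>auto simp: y_def vtl_def\<close>)
      show "vtl (vec (n + 1) (\<lambda>j. w $ j - w $ 0 * 1 * x j)) = vtl w + - (w $ 0 * c) \<cdot>\<^sub>v unit_vec n (k - 1)"
        by (rule eq_vecI) (use dv k in \<open>auto simp: x_def vtl_def\<close>)
    qed auto
  qed
qed

lemma caseF2: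
  fixes v w :: "'a::comm_ring_1 vec"
  assumes n: "n = Suc (Suc r')" and dv: "dim_vec v = n + 1" "dim_vec w = n + 1"
    and vw: "v \<bullet> w = 1" and k: "1 \<le> k" "k \<le> n"
    and L: "L = four_block_mat (1\<^sub>m (2^(n-1))) (0\<^sub>m (2^(n-1)) (2^(n-1))) (- ((-c) \<cdot>\<^sub>m suslin_bar (n-1) (0\<^sub>v n) (unit_vec n (k - 1)))) (1\<^sub>m (2^(n-1)))
     * suslin n v w * four_block_mat (1\<^sub>m (2^(n-1))) ((-c) \<cdot>\<^sub>m suslin (n-1) (0\<^sub>v n) (unit_vec n (k - 1))) (0\<^sub>m (2^(n-1)) (2^(n-1))) (1\<^sub>m (2^(n-1)))"
  shows "\<exists>\<epsilon> \<in> elem_group (n + 1). \<exists>\<rho>. \<rho> \<in> carrier_mat (n + 1) (n + 1) \<and>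
            \<rho> * transpose_mat \<epsilon> = 1\<^sub>m (n + 1) \<and> transpose_mat \<epsilon> * \<rho> = 1\<^sub>m (n + 1) \<and>
            L = suslin n (v \<^sub>r* \<epsilon>) (w \<^sub>r* \<rho>)"
proof -
  have k0: "k \<noteq> 0" "k < n + 1" using k by auto
  have vw1: "(\<Sum>i<n + 1. v $ i * w $ i) = 1" using vw dv by (simp add: scalar_prod_def atLeast0LessThan)
  have wv1: "(\<Sum>i<n + 1. w $ i * v $ i) = 1" using vw1 by (simp add: mult.commute)
  note cf = common_facts[OF dv k]
  define x where "x i = (-c) * (if i = 0 then v $ k else if i = k then - (v $ 0) else 0)" for i :: nat
  define y where "y j = v $ j" for j :: nat
  have s1: "(\<Sum>i<n + 1. v $ i * x i) = 0" unfolding x_def sd3[OF k0] by (simp add: algebra_simps)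
  have xy: "(\<Sum>l<n + 1. x l * y l) = 0" using s1 unfolding y_def by (simp add: mult.commute)
  have s2: "(\<Sum>i<n + 1. w $ i * y i) = 1" unfolding y_def by (rule wv1)
  have el0: "idp (n + 1) (\<lambda>i j. v $ i * ((-c) * (if j = 0 then v $ k else if j = k then - (v $ 0) else 0))) \<in> elem_group (n + 1)"
  proof -
    define l where "l = (if k = 1 then 2 else (1::nat))"
    have l: "l < n + 1" "l \<noteq> 0" "l \<noteq> k" using n k unfolding l_def by auto
    show ?thesis by (rule elem_core) (use k0 l in auto)
  qed
  have el: "idp (n + 1) (\<lambda>i j. x i * y j) = transpose_mat (idp (n + 1) (\<lambda>i j. v $ i * ((-c) * (if j = 0 then v $ k else if j = k then - (v $ 0) else 0))))"
    unfolding transpose_idp by (rule idp_cong) (simp add: x_def y_def mult.commute)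
  show ?thesis
  proof (rule witness[where x = x and y = y and Q = "\<lambda>V W. L = suslin n V W", OF dv xy])
    show "idp (n + 1) (\<lambda>i j. x i * y j) \<in> elem_group (n + 1)"
      unfolding el by (rule elem_transpose[OF el0])
    show "L = suslin n (vec (n + 1) (\<lambda>j. v $ j + (\<Sum>i<n + 1. v $ i * x i) * y j))
        (vec (n + 1) (\<lambda>j. w $ j - (\<Sum>i<n + 1. w $ i * y i) * x j))"
      unfolding s1 s2 L
    proof (rule finish2[OF n dv, where p = "0\<^sub>v n" and q = "unit_vec n (k - 1)" and t = "v $ k"])
      show "0\<^sub>v n \<bullet> unit_vec n (k - 1) = 0" by (rule cf(4))
      show "v $ k = 0\<^sub>v n \<bullet> vtl w + vtl v \<bullet> unit_vec n (k - 1)" using cf by simp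
      show "vec (n + 1) (\<lambda>j. v $ j + 0 * y j) $ 0 = v $ 0" by simp
      show "vec (n + 1) (\<lambda>j. w $ j - 1 * x j) $ 0 = w $ 0 + c * v $ k" by (simp add: x_def)
      show "vtl (vec (n + 1) (\<lambda>j. v $ j + 0 * y j)) = vtl v + - (v $ 0 * c) \<cdot>\<^sub>v 0\<^sub>v n"
        by (rule eq_vecI) (use dv in \<open>auto simp: vtl_def\<close>)
      show "vtl (vec (n + 1) (\<lambda>j. w $ j - 1 * x j)) = vtl w + - (v $ 0 * c) \<cdot>\<^sub>v unit_vec n (k - 1)"
        by (rule eq_vecI) (use dv k in \<open>auto simp: x_def vtl_def\<close>)
    qed auto
  qed
qed


theorem lemma3p4:
  fixes v w :: "'a :: comm_ring_1 vec" and n k :: nat and c :: 'a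
    and X Xbar :: "'a mat"
  assumes "n \<ge> 2"
    and "dim_vec v = n + 1" and "dim_vec w = n + 1"
    and "v \<bullet> w = 1"
    and "1 \<le> k" and "k \<le> n"
    and "(X = (- c) \<cdot>\<^sub>m suslin (n - 1) (unit_vec n (k - 1)) (0\<^sub>v n) \<and>
          Xbar = (- c) \<cdot>\<^sub>m suslin_bar (n - 1) (unit_vec n (k - 1)) (0\<^sub>v n))
       \<or> (X = (- c) \<cdot>\<^sub>m suslin (n - 1) (0\<^sub>v n) (unit_vec n (k - 1)) \<and>
          Xbar = (- c) \<cdot>\<^sub>m suslin_bar (n - 1) (0\<^sub>v n) (unit_vec n (k - 1)))"
  shows "(\<exists>\<epsilon> \<in> elem_group (n + 1). \<exists>\<rho>. \<rho> \<in> carrier_mat (n + 1) (n + 1) \<and>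
            \<rho> * transpose_mat \<epsilon> = 1\<^sub>m (n + 1) \<and> transpose_mat \<epsilon> * \<rho> = 1\<^sub>m (n + 1) \<and>
            four_block_mat (1\<^sub>m (2 ^ (n - 1))) X (0\<^sub>m (2 ^ (n - 1)) (2 ^ (n - 1))) (1\<^sub>m (2 ^ (n - 1)))
              * suslin n v w
              * four_block_mat (1\<^sub>m (2 ^ (n - 1))) (0\<^sub>m (2 ^ (n - 1)) (2 ^ (n - 1))) (- Xbar) (1\<^sub>m (2 ^ (n - 1)))
            = suslin n (v \<^sub>r* \<epsilon>) (w \<^sub>r* \<rho>))
       \<and> (\<exists>\<sigma> \<in> elem_group (n + 1). \<exists>\<rho>. \<rho> \<in> carrier_mat (n + 1) (n + 1) \<and>
            \<rho> * transpose_mat \<sigma> = 1\<^sub>m (n + 1) \<and> transpose_mat \<sigma> * \<rho> = 1\<^sub>m (n + 1) \<and>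
            four_block_mat (1\<^sub>m (2 ^ (n - 1))) (0\<^sub>m (2 ^ (n - 1)) (2 ^ (n - 1))) (- Xbar) (1\<^sub>m (2 ^ (n - 1)))
              * suslin n v w
              * four_block_mat (1\<^sub>m (2 ^ (n - 1))) X (0\<^sub>m (2 ^ (n - 1)) (2 ^ (n - 1))) (1\<^sub>m (2 ^ (n - 1)))
            = suslin n (v \<^sub>r* \<sigma>) (w \<^sub>r* \<rho>))"
proof -
  define r' where "r' = n - 2"
  have n: "n = Suc (Suc r')" using assms(1) unfolding r'_def by arith
  from assms(7) show ?thesis
  proof (elim disjE conjE)
    assume X: "X = (- c) \<cdot>\<^sub>m suslin (n - 1) (unit_vec n (k - 1)) (0\<^sub>v n)"
      and Xb: "Xbar = (- c) \<cdot>\<^sub>m suslin_bar (n - 1) (unit_vec n (k - 1)) (0\<^sub>v n)"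
    show ?thesis unfolding X Xb
      by (intro conjI caseE1[OF n assms(2) assms(3) assms(4) assms(5) assms(6) refl]
          caseE2[OF n assms(2) assms(3) assms(4) assms(5) assms(6) refl])
  next
    assume X: "X = (- c) \<cdot>\<^sub>m suslin (n - 1) (0\<^sub>v n) (unit_vec n (k - 1))"
      and Xb: "Xbar = (- c) \<cdot>\<^sub>m suslin_bar (n - 1) (0\<^sub>v n) (unit_vec n (k - 1))"
    show ?thesis unfolding X Xb
      by (intro conjI caseF1[OF n assms(2) assms(3) assms(4) assms(5) assms(6) refl]
          caseF2[OF n assms(2) assms(3) assms(4) assms(5) assms(6) refl])
  qed
qed

end
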